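(* In the one-path setting with groups $\mathcal{G}$ and junction trees $H_g$ as below, every vertex of $V(E^* )\setminus V(P)$ and every edge of $E^*\setminus E(P)$ belongs to at most $10\lfloor\log_2|P|\rfloor+12$ of the graphs $H_g$, $g\in\mathcal{G}$.
   Context: One-path setting: $G$ is a digraph, $D=\{(s_i,t_i)\}_{i\in[k]}$, $E^*\subseteq E(G)$, $P=v_0v_1\cdots v_{|P|}$ a dipath with edges in $E^*$, $|P|\ge1$ its number of edges; reachability w.r.t. $E^*$; every pair has an $s_i$-$t_i$ dipath in $E^*$ meeting $P$. $u\le_P w$ means $u$ appears no later than $w$ on $P$; $P[u,w]$ is the subpath from $u$ to $w$. $a_i$ is the $\le_P$-first vertex of $P$ reachable from $s_i$, $b_i$ the $\le_P$-last vertex of $P$ that can reach $t_i$; $I_i=P[a_i,b_i]$ with $|I_i|$ its number of edges. For each $i$, $P_{s_i}$ is a fixed dipath in $E^*$ from $s_i$ to $a_i$ and $P_{t_i}$ a fixed dipath in $E^*$ from $b_i$ to $t_i$. Groups: $D_0=\{i:a_i=b_i\}$; for $j\in\{1,\dots,\lfloor\log_2|P|\rfloor+1\}$, $D_j=\{i:2^{j-1}\le|I_i|<2^j\}$; for a vertex $v$ of $P$, $D_j^v=\{i\in D_j: v\in I_i\}$; $\mathcal{G}=\{D_0^v: v=a_i=b_i\text{ for some }i\in D_0\}\cup\bigcup_{j\ge1}\{D_j^{v_\ell}: 0\le\ell\le|P|,\ \ell\text{ a multiple of }2^{j-1}\}$. For a nonempty $g\in\mathcal{G}$, $H_g=P[a_{\mathrm{start}},b_{\mathrm{end}}]\cup\bigcup_{i\in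 g}(P_{s_i}\cup P_{t_i})$, where $a_{\mathrm{start}}$ is the $\le_P$-minimum of $\{a_i:i\in g\}$ and $b_{\mathrm{end}}$ the $\le_P$-maximum of $\{b_i:i\in g\}$. *)

theory Defs
  imports Complex_Main
begin

text \<open>The path P is the list p = [v_0,...,v_|P|],
so |P| = length p - 1 and vertex v_l is p ! l; vertices of P are handled via their indices.\<close>

definition dipath :: "('v \<times> 'v) set \<Rightarrow> 'v list \<Rightarrow> bool" where
  "dipath E xs \<longleftrightarrow> xs \<noteq> [] \<and> distinct xs \<and>
     (\<forall>j. Suc j < length xs \<longrightarrow> (xs ! j, xs ! Suc j) \<in> E)"

definition path_edges :: "'v list \<Rightarrow> ('v \<times> 'v) set" where
  "path_edges xs = {(xs ! j, xs ! Suc j) | j. Suc j < length xs}"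

definition verts_of :: "('v \<times> 'v) set \<Rightarrow> 'v set" where
  "verts_of E = fst ` E \<union> snd ` E"

definition plen :: "'v list \<Rightarrow> nat" where
  "plen p = length p - 1"

definition lg :: "nat \<Rightarrow> nat" where
  "lg L = nat \<lfloor>log 2 (real L)\<rfloor>"

text \<open>Index of a_i: the first vertex of P reachable (w.r.t. E) from u.\<close>
definition first_idx :: "('v \<times> 'v) set \<Rightarrow> 'v list \<Rightarrow> 'v \<Rightarrow> nat" where
  "first_idx E p u = (LEAST l. l < length p \<and> (u, p ! l) \<in> E\<^sup>*)"

text \<open>Index of b_i: the last vertex of P that can reach w (w.r.t. E).\<close>
definition last_idx :: "('v \<times> 'v) set \<Rightarrow> 'v list \<Rightarrow> 'v \<Rightarrow> nat" where
  "last_idx E p w = (GREATEST l. l < length p \<and> (p ! l, w) \<in> E\<^sup>*)"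

definition aidx :: "('v \<times> 'v) set \<Rightarrow> 'v list \<Rightarrow> (nat \<Rightarrow> 'v) \<Rightarrow> nat \<Rightarrow> nat" where
  "aidx E p s i = first_idx E p (s i)"

definition bidx :: "('v \<times> 'v) set \<Rightarrow> 'v list \<Rightarrow> (nat \<Rightarrow> 'v) \<Rightarrow> nat \<Rightarrow> nat" where
  "bidx E p t i = last_idx E p (t i)"

definition grpD0 :: "('v \<times> 'v) set \<Rightarrow> 'v list \<Rightarrow> (nat \<Rightarrow> 'v) \<Rightarrow> (nat \<Rightarrow> 'v) \<Rightarrow> nat \<Rightarrow> nat set" where
  "grpD0 E p s t k = {i. i < k \<and> aidx E p s i = bidx E p t i}"

definition grpD :: "('v \<times> 'v) set \<Rightarrow> 'v list \<Rightarrow> (nat \<Rightarrow> 'v) \<Rightarrow> (nat \<Rightarrow> 'v) \<Rightarrow> nat \<Rightarrow> nat \<Rightarrow> nat set" where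
  "grpD E p s t k j = {i. i < k \<and> 2 ^ (j - 1) \<le> bidx E p t i - aidx E p s i
                           \<and> bidx E p t i - aidx E p s i < 2 ^ j}"

text \<open>D^v restricted to those i with v = v_l in I_i.\<close>
definition at_vertex :: "('v \<times> 'v) set \<Rightarrow> 'v list \<Rightarrow> (nat \<Rightarrow> 'v) \<Rightarrow> (nat \<Rightarrow> 'v) \<Rightarrow> nat set \<Rightarrow> nat \<Rightarrow> nat set" where
  "at_vertex E p s t D l = {i \<in> D. aidx E p s i \<le> l \<and> l \<le> bidx E p t i}"

definition groups :: "('v \<times> 'v) set \<Rightarrow> 'v list \<Rightarrow> (nat \<Rightarrow> 'v) \<Rightarrow> (nat \<Rightarrow> 'v) \<Rightarrow> nat \<Rightarrow> nat set set" where
  "groups E p s t k =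
     {at_vertex E p s t (grpD0 E p s t k) l | l. \<exists>i \<in> grpD0 E p s t k. l = aidx E p s i}
     \<union> (\<Union>j \<in> {1..lg (plen p) + 1}.
          {at_vertex E p s t (grpD E p s t k j) l | l. l \<le> plen p \<and> 2 ^ (j - 1) dvd l})"

definition HV :: "('v \<times> 'v) set \<Rightarrow> 'v list \<Rightarrow> (nat \<Rightarrow> 'v) \<Rightarrow> (nat \<Rightarrow> 'v)
    \<Rightarrow> (nat \<Rightarrow> 'v list) \<Rightarrow> (nat \<Rightarrow> 'v list) \<Rightarrow> nat set \<Rightarrow> 'v set" where
  "HV E p s t Ps Pt g =
     {p ! l | l. Min (aidx E p s ` g) \<le> l \<and> l \<le> Max (bidx E p t ` g)}
     \<union> (\<Union>i \<in> g. set (Ps i) \<union> set (Pt i))"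

definition HE :: "('v \<times> 'v) set \<Rightarrow> 'v list \<Rightarrow> (nat \<Rightarrow> 'v) \<Rightarrow> (nat \<Rightarrow> 'v)
    \<Rightarrow> (nat \<Rightarrow> 'v list) \<Rightarrow> (nat \<Rightarrow> 'v list) \<Rightarrow> nat set \<Rightarrow> ('v \<times> 'v) set" where
  "HE E p s t Ps Pt g =
     {(p ! l, p ! Suc l) | l. Min (aidx E p s ` g) \<le> l \<and> l < Max (bidx E p t ` g)}
     \<union> (\<Union>i \<in> g. path_edges (Ps i) \<union> path_edges (Pt i))"

end

theory Submission imports Defs begin

lemma dipath_reach:
  assumes "dipath E q" "i \<le> j" "j < length q"
  shows "(q ! i, q ! j) \<in> E\<^sup>*"
  using assms(2,3)
proof (induction j)
  case 0 then show ?case by simp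
next
  case (Suc j)
  show ?case
  proof (cases "i = Suc j")
    case True then show ?thesis by simp
  next
    case False
    then have "(q ! i, q ! j) \<in> E\<^sup>*" using Suc by simp
    moreover have "(q ! j, q ! Suc j) \<in> E" using assms(1) Suc.prems unfolding dipath_def by blast
    ultimately show ?thesis by (meson rtrancl.rtrancl_into_rtrancl)
  qed
qed

lemma dipath_mem_reach:
  assumes "dipath E q" "u \<in> set q"
  shows "(hd q, u) \<in> E\<^sup>*" "(u, last q) \<in> E\<^sup>*"
proof -
  obtain m where m: "m < length q" "q ! m = u" using assms(2) by (meson in_set_conv_nth)
  have ne: "q \<noteq> []" using assms(1) unfolding dipath_def by blast
  show "(hd q, u) \<in> E\<^sup>*" using dipath_reach[OF assms(1), of 0 m] m ne by (simp add: hd_conv_nth)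
  show "(u, last q) \<in> E\<^sup>*" using dipath_reach[OF assms(1), of m "length q - 1"] m ne
    by (simp add: last_conv_nth)
qed

lemma count_mult:
  fixes m :: nat
  assumes "m > 0" "finite S" "\<forall>l\<in>S. m dvd l" "\<forall>a\<in>S. \<forall>b\<in>S. b < a + 2*m"
  shows "card S \<le> 2"
proof (cases "S = {}")
  case True then show ?thesis by simp
next
  case False
  have "S \<subseteq> {Min S, Min S + m}"
  proof
    fix l assume l: "l \<in> S"
    have mn: "Min S \<in> S" "Min S \<le> l" using assms(2) False l by auto
    have "m dvd l - Min S" using assms(3) l mn by (simp add: dvd_diff_nat)
    then obtain q where q: "l - Min S = m * q" by blast
    have "l - Min S < 2 * m" using assms(4) l mn by fastforce
    then have "q < 2" using q assms(1) by (metis mult.commute mult_less_cancel2)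
    then have "q = 0 \<or> q = 1" by auto
    then show "l \<in> {Min S, Min S + m}" using q mn by auto
  qed
  then have "card S \<le> card {Min S, Min S + m}" by (intro card_mono) auto
  also have "\<dots> \<le> 2" by (simp add: card_insert_if)
  finally show ?thesis .
qed


lemma groups_sub: "g \<in> groups E p s t k \<Longrightarrow> g \<subseteq> {..<k}"
  unfolding groups_def at_vertex_def grpD0_def grpD_def by auto

lemma SA_bound:
  "card {g \<in> groups E p s t k. \<exists>i\<in>g. aidx E p s i = \<alpha>} \<le> 2 * lg (plen p) + 3"
proof -
  define L where "L = lg (plen p)"
  define LA where "LA j = {l. l \<le> plen p \<and> 2^(j-1) dvd l \<and> \<alpha> \<le> l \<and> l < \<alpha> + 2 * 2^(j-1)}" for j :: nat
  have sub: "{g \<in> groups E p s t k. \<exists>i\<in>g. aidx E p s i = \<alpha>} \<subseteq>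
     {at_vertex E p s t (grpD0 E p s t k) \<alpha>} \<union> (\<Union>j\<in>{1..L+1}. (\<lambda>l. at_vertex E p s t (grpD E p s t k j) l) ` LA j)"
  proof
    fix g assume "g \<in> {g \<in> groups E p s t k. \<exists>i\<in>g. aidx E p s i = \<alpha>}"
    then obtain i where g: "g \<in> groups E p s t k" and i: "i \<in> g" "aidx E p s i = \<alpha>" by blast
    from g consider (a) l where "g = at_vertex E p s t (grpD0 E p s t k) l"
      | (b) j l where "j \<in> {1..L+1}" "l \<le> plen p" "2 ^ (j - 1) dvd l" "g = at_vertex E p s t (grpD E p s t k j) l"
      unfolding groups_def L_def by blast
    then show "g \<in> {at_vertex E p s t (grpD0 E p s t k) \<alpha>} \<union> (\<Union>j\<in>{1..L+1}. (\<lambda>l. at_vertex E p s t (grpD E p s t k j) l) ` LA j)"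
    proof cases
      case (a l)
      then have "l = \<alpha>" using i unfolding at_vertex_def grpD0_def by auto
      then show ?thesis using a by simp
    next
      case (b j l)
      have j1: "(2::nat) ^ j = 2 * 2 ^ (j - 1)" using b(1) by (cases j) auto
      have "l \<in> LA j" using i b j1 unfolding at_vertex_def grpD_def LA_def by auto
      then show ?thesis using b by blast
    qed
  qed
  have fin: "finite (LA j)" for j unfolding LA_def by auto
  have cLA: "card ((\<lambda>l. at_vertex E p s t (grpD E p s t k j) l) ` LA j) \<le> 2" for j
  proof -
    have "card (LA j) \<le> 2"
      by (rule count_mult[of "2^(j-1)"]) (use fin in \<open>auto simp: LA_def\<close>)
    then show ?thesis using card_image_le[OF fin[of j], of "\<lambda>l. at_vertex E p s t (grpD E p s t k j) l"] by linarith
  qed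
  have "card {g \<in> groups E p s t k. \<exists>i\<in>g. aidx E p s i = \<alpha>} \<le>
     card ({at_vertex E p s t (grpD0 E p s t k) \<alpha>} \<union> (\<Union>j\<in>{1..L+1}. (\<lambda>l. at_vertex E p s t (grpD E p s t k j) l) ` LA j))"
    by (rule card_mono[OF _ sub]) (use fin in auto)
  also have "\<dots> \<le> 1 + card (\<Union>j\<in>{1..L+1}. (\<lambda>l. at_vertex E p s t (grpD E p s t k j) l) ` LA j)"
    by (rule order_trans[OF card_Un_le]) simp
  also have "\<dots> \<le> 1 + (\<Sum>j\<in>{1..L+1}. card ((\<lambda>l. at_vertex E p s t (grpD E p s t k j) l) ` LA j))"
    using card_UN_le[of "{1..L+1}"] by simp
  also have "\<dots> \<le> 1 + (\<Sum>j\<in>{1..L+1}. 2)"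
    using sum_mono[of "{1..L+1}", OF cLA] by simp
  also have "\<dots> = 2 * L + 3" by simp
  finally show ?thesis unfolding L_def .
qed

lemma SB_bound:
  "card {g \<in> groups E p s t k. \<exists>i\<in>g. bidx E p t i = \<beta>} \<le> 2 * lg (plen p) + 3"
proof -
  define L where "L = lg (plen p)"
  define LA where "LA j = {l. l \<le> plen p \<and> 2^(j-1) dvd l \<and> l \<le> \<beta> \<and> \<beta> < l + 2 * 2^(j-1)}" for j :: nat
  have sub: "{g \<in> groups E p s t k. \<exists>i\<in>g. bidx E p t i = \<beta>} \<subseteq>
     {at_vertex E p s t (grpD0 E p s t k) \<beta>} \<union> (\<Union>j\<in>{1..L+1}. (\<lambda>l. at_vertex E p s t (grpD E p s t k j) l) ` LA j)"
  proof
    fix g assume "g \<in> {g \<in> groups E p s t k. \<exists>i\<in>g. bidx E p t i = \<beta>}"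
    then obtain i where g: "g \<in> groups E p s t k" and i: "i \<in> g" "bidx E p t i = \<beta>" by blast
    from g consider (a) l where "g = at_vertex E p s t (grpD0 E p s t k) l"
      | (b) j l where "j \<in> {1..L+1}" "l \<le> plen p" "2 ^ (j - 1) dvd l" "g = at_vertex E p s t (grpD E p s t k j) l"
      unfolding groups_def L_def by blast
    then show "g \<in> {at_vertex E p s t (grpD0 E p s t k) \<beta>} \<union> (\<Union>j\<in>{1..L+1}. (\<lambda>l. at_vertex E p s t (grpD E p s t k j) l) ` LA j)"
    proof cases
      case (a l)
      then have "l = \<beta>" using i unfolding at_vertex_def grpD0_def by auto
      then show ?thesis using a by simp
    next
      case (b j l)
      have j1: "(2::nat) ^ j = 2 * 2 ^ (j - 1)" using b(1) by (cases j) auto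
      have "l \<in> LA j" using i b j1 unfolding at_vertex_def grpD_def LA_def by auto
      then show ?thesis using b by blast
    qed
  qed
  have fin: "finite (LA j)" for j unfolding LA_def by auto
  have cLA: "card ((\<lambda>l. at_vertex E p s t (grpD E p s t k j) l) ` LA j) \<le> 2" for j
  proof -
    have "card (LA j) \<le> 2"
      by (rule count_mult[of "2^(j-1)"]) (use fin in \<open>auto simp: LA_def\<close>)
    then show ?thesis using card_image_le[OF fin[of j], of "\<lambda>l. at_vertex E p s t (grpD E p s t k j) l"] by linarith
  qed
  have "card {g \<in> groups E p s t k. \<exists>i\<in>g. bidx E p t i = \<beta>} \<le>
     card ({at_vertex E p s t (grpD0 E p s t k) \<beta>} \<union> (\<Union>j\<in>{1..L+1}. (\<lambda>l. at_vertex E p s t (grpD E p s t k j) l) ` LA j))"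
    by (rule card_mono[OF _ sub]) (use fin in auto)
  also have "\<dots> \<le> 1 + card (\<Union>j\<in>{1..L+1}. (\<lambda>l. at_vertex E p s t (grpD E p s t k j) l) ` LA j)"
    by (rule order_trans[OF card_Un_le]) simp
  also have "\<dots> \<le> 1 + (\<Sum>j\<in>{1..L+1}. card ((\<lambda>l. at_vertex E p s t (grpD E p s t k j) l) ` LA j))"
    using card_UN_le[of "{1..L+1}"] by simp
  also have "\<dots> \<le> 1 + (\<Sum>j\<in>{1..L+1}. 2)"
    using sum_mono[of "{1..L+1}", OF cLA] by simp
  also have "\<dots> = 2 * L + 3" by simp
  finally show ?thesis unfolding L_def .
qed


lemma reach_p:
  assumes "dipath E q" "set q \<inter> set p \<noteq> {}"
  shows "\<exists>l<length p. (hd q, p ! l) \<in> E\<^sup>*" "\<exists>l<length p. (p ! l, last q) \<in> E\<^sup>*"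
proof -
  obtain y where y: "y \<in> set q" "y \<in> set p" using assms(2) by blast
  obtain l where l: "l < length p" "p ! l = y" using y(2) by (meson in_set_conv_nth)
  show "\<exists>l<length p. (hd q, p ! l) \<in> E\<^sup>*" using l dipath_mem_reach(1)[OF assms(1) y(1)] by blast
  show "\<exists>l<length p. (p ! l, last q) \<in> E\<^sup>*" using l dipath_mem_reach(2)[OF assms(1) y(1)] by blast
qed

lemma aidx_props:
  assumes "\<exists>l<length p. (s i, p ! l) \<in> E\<^sup>*"
  shows "aidx E p s i < length p \<and> (s i, p ! aidx E p s i) \<in> E\<^sup>*"
  unfolding aidx_def first_idx_def using LeastI_ex[OF assms] by blast

lemma bidx_props:
  assumes "\<exists>l<length p. (p ! l, t i) \<in> E\<^sup>*"
  shows "bidx E p t i < length p \<and> (p ! bidx E p t i, t i) \<in> E\<^sup>*"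
proof -
  obtain l where l: "l < length p" "(p ! l, t i) \<in> E\<^sup>*" using assms by blast
  show ?thesis unfolding bidx_def last_idx_def
    by (rule GreatestI_nat[where k = l and b = "length p"]) (use l in auto)
qed

lemma aidx_eq:
  assumes "\<exists>l<length p. (s i, p ! l) \<in> E\<^sup>*" "(s i, u) \<in> E\<^sup>*" "(u, p ! aidx E p s i) \<in> E\<^sup>*"
  shows "aidx E p s i = first_idx E p u"
proof -
  have a: "aidx E p s i < length p" using aidx_props[of p s i E, OF assms(1)] by blast
  have le1: "first_idx E p u \<le> aidx E p s i"
    unfolding first_idx_def by (rule Least_le) (use a assms(3) in auto)
  have "first_idx E p u < length p \<and> (u, p ! first_idx E p u) \<in> E\<^sup>*"
    unfolding first_idx_def by (rule LeastI[where k = "aidx E p s i"]) (use a assms(3) in auto)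
  then have "aidx E p s i \<le> first_idx E p u"
    unfolding aidx_def first_idx_def using assms(2)
    by (intro Least_le) (meson rtrancl_trans)
  then show ?thesis using le1 by simp
qed

lemma bidx_eq:
  assumes "\<exists>l<length p. (p ! l, t i) \<in> E\<^sup>*" "(u, t i) \<in> E\<^sup>*" "(p ! bidx E p t i, u) \<in> E\<^sup>*"
  shows "bidx E p t i = last_idx E p u"
proof -
  have a: "bidx E p t i < length p" using bidx_props[of p t i E, OF assms(1)] by blast
  have le1: "bidx E p t i \<le> last_idx E p u"
    unfolding last_idx_def by (rule Greatest_le_nat[where b = "length p"]) (use a assms(3) in auto)
  have "last_idx E p u < length p \<and> (p ! last_idx E p u, u) \<in> E\<^sup>*"
    unfolding last_idx_def by (rule GreatestI_nat[where k = "bidx E p t i" and b = "length p"]) (use a assms(3) in auto)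
  then have "last_idx E p u \<le> bidx E p t i"
    unfolding bidx_def last_idx_def using assms(2)
    by (intro Greatest_le_nat[where b = "length p"]) (auto intro: rtrancl_trans)
  then show ?thesis using le1 by simp
qed

lemma groups_finite: "finite (groups E p s t k)"
proof -
  have "groups E p s t k \<subseteq> Pow {..<k}" using groups_sub by blast
  then show ?thesis by (rule finite_subset) simp
qed


lemma max_b_lt:
  assumes "g \<in> groups E p s t k" "g \<noteq> {}"
    and ex: "\<forall>i<k. \<exists>l<length p. (p ! l, t i) \<in> E\<^sup>*"
  shows "Max (bidx E p t ` g) < length p"
proof -
  have sub: "g \<subseteq> {..<k}" using groups_sub[OF assms(1)] .
  then have fin: "finite g" by (rule finite_subset) simp
  have "Max (bidx E p t ` g) \<in> bidx E p t ` g" using fin assms(2) by (intro Max_in) auto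
  then obtain i where "i \<in> g" "Max (bidx E p t ` g) = bidx E p t i" by auto
  moreover have "i < k" using sub \<open>i \<in> g\<close> by auto
  ultimately show ?thesis using ex bidx_props[of p t i E] by simp
qed

lemma count_union:
  "card {g \<in> groups E p s t k. (\<exists>i\<in>g. aidx E p s i = \<alpha>) \<or> (\<exists>i\<in>g. bidx E p t i = \<beta>)}
     \<le> 10 * lg (plen p) + 12"
proof -
  have "{g \<in> groups E p s t k. (\<exists>i\<in>g. aidx E p s i = \<alpha>) \<or> (\<exists>i\<in>g. bidx E p t i = \<beta>)}
     = {g \<in> groups E p s t k. \<exists>i\<in>g. aidx E p s i = \<alpha>} \<union> {g \<in> groups E p s t k. \<exists>i\<in>g. bidx E p t i = \<beta>}"
    by blast
  then have "card {g \<in> groups E p s t k. (\<exists>i\<in>g. aidx E p s i = \<alpha>) \<or> (\<exists>i\<in>g. bidx E p t i = \<beta>)}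
     \<le> card {g \<in> groups E p s t k. \<exists>i\<in>g. aidx E p s i = \<alpha>} + card {g \<in> groups E p s t k. \<exists>i\<in>g. bidx E p t i = \<beta>}"
    by (simp only: card_Un_le)
  then show ?thesis using SA_bound[of E p s t k \<alpha>] SB_bound[of E p s t k \<beta>] by linarith
qed

theorem mainTheorem13:
  fixes VG :: "'v set" and EG Estar :: "('v \<times> 'v) set" and p :: "'v list"
    and k :: nat and s t :: "nat \<Rightarrow> 'v" and Ps Pt :: "nat \<Rightarrow> 'v list"
  assumes "finite VG" and "EG \<subseteq> VG \<times> VG" and "Estar \<subseteq> EG"
    and "dipath Estar p" and "plen p \<ge> 1"
    and "\<forall>i<k. s i \<in> VG \<and> t i \<in> VG"
    and "\<forall>i<k. \<exists>q. dipath Estar q \<and> hd q = s i \<and> last q = t i \<and> set q \<inter> set p \<noteq> {}"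
    and "\<forall>i<k. dipath Estar (Ps i) \<and> hd (Ps i) = s i \<and> last (Ps i) = p ! aidx Estar p s i"
    and "\<forall>i<k. dipath Estar (Pt i) \<and> hd (Pt i) = p ! bidx Estar p t i \<and> last (Pt i) = t i"
  shows "(\<forall>x \<in> verts_of Estar - set p.
            card {g \<in> groups Estar p s t k. g \<noteq> {} \<and> x \<in> HV Estar p s t Ps Pt g}
              \<le> 10 * lg (plen p) + 12)
       \<and> (\<forall>e \<in> Estar - path_edges p.
            card {g \<in> groups Estar p s t k. g \<noteq> {} \<and> e \<in> HE Estar p s t Ps Pt g}
              \<le> 10 * lg (plen p) + 12)"
proof -
  have exS: "\<forall>i<k. \<exists>l<length p. (s i, p ! l) \<in> Estar\<^sup>*"
  proof (intro allI impI)
    fix i assume "i < k"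
    then obtain q where q: "dipath Estar q" "hd q = s i" "set q \<inter> set p \<noteq> {}" using assms(7) by blast
    show "\<exists>l<length p. (s i, p ! l) \<in> Estar\<^sup>*" using reach_p(1)[OF q(1,3)] q(2) by simp
  qed
  have exT: "\<forall>i<k. \<exists>l<length p. (p ! l, t i) \<in> Estar\<^sup>*"
  proof (intro allI impI)
    fix i assume "i < k"
    then obtain q where q: "dipath Estar q" "last q = t i" "set q \<inter> set p \<noteq> {}" using assms(7) by blast
    show "\<exists>l<length p. (p ! l, t i) \<in> Estar\<^sup>*" using reach_p(2)[OF q(1,3)] q(2) by simp
  qed
  have keyS: "aidx Estar p s i = first_idx Estar p u" if "i < k" "u \<in> set (Ps i)" for i u
  proof -
    have d: "dipath Estar (Ps i)" using assms(8) that(1) by blast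
    show ?thesis
      using aidx_eq[of p s i Estar u] exS that dipath_mem_reach[OF d that(2)] assms(8) by auto
  qed
  have keyT: "bidx Estar p t i = last_idx Estar p u" if "i < k" "u \<in> set (Pt i)" for i u
  proof -
    have d: "dipath Estar (Pt i)" using assms(9) that(1) by blast
    show ?thesis
      using bidx_eq[of p t i Estar u] exT that dipath_mem_reach[OF d that(2)] assms(9) by auto
  qed
  have fin: "finite {g \<in> groups Estar p s t k. (\<exists>i\<in>g. aidx Estar p s i = \<alpha>) \<or> (\<exists>i\<in>g. bidx Estar p t i = \<beta>)}"
    for \<alpha> \<beta> using groups_finite[of Estar p s t k] by simp
  have fstmem: "fst e \<in> set xs" if "e \<in> path_edges xs" for e and xs :: "'v list"
    using that unfolding path_edges_def by auto
  show ?thesis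
  proof (intro conjI ballI)
    fix x assume x: "x \<in> verts_of Estar - set p"
    have subs: "{g \<in> groups Estar p s t k. g \<noteq> {} \<and> x \<in> HV Estar p s t Ps Pt g} \<subseteq>
      {g \<in> groups Estar p s t k. (\<exists>i\<in>g. aidx Estar p s i = first_idx Estar p x) \<or> (\<exists>i\<in>g. bidx Estar p t i = last_idx Estar p x)}"
    proof
      fix g assume "g \<in> {g \<in> groups Estar p s t k. g \<noteq> {} \<and> x \<in> HV Estar p s t Ps Pt g}"
      then have g: "g \<in> groups Estar p s t k" "g \<noteq> {}" "x \<in> HV Estar p s t Ps Pt g" by auto
      have sub: "g \<subseteq> {..<k}" using groups_sub[OF g(1)] .
      have mx: "Max (bidx Estar p t ` g) < length p" using max_b_lt[OF g(1,2) exT] .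
      from g(3) consider (P) l where "x = p ! l" "l \<le> Max (bidx Estar p t ` g)"
        | (S) i where "i \<in> g" "x \<in> set (Ps i)" | (T) i where "i \<in> g" "x \<in> set (Pt i)"
        unfolding HV_def by blast
      then have "(\<exists>i\<in>g. aidx Estar p s i = first_idx Estar p x) \<or> (\<exists>i\<in>g. bidx Estar p t i = last_idx Estar p x)"
      proof cases
        case (P l) then have "x \<in> set p" using mx by auto
        then show ?thesis using x by blast
      next
        case (S i) then show ?thesis using keyS[of i x] sub by auto
      next
        case (T i) then show ?thesis using keyT[of i x] sub by auto
      qed
      then show "g \<in> {g \<in> groups Estar p s t k. (\<exists>i\<in>g. aidx Estar p s i = first_idx Estar p x) \<or> (\<exists>i\<in>g. bidx Estar p t i = last_idx Estar p x)}"
        using g(1) by simp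
    qed
    then show "card {g \<in> groups Estar p s t k. g \<noteq> {} \<and> x \<in> HV Estar p s t Ps Pt g} \<le> 10 * lg (plen p) + 12"
      using card_mono[OF fin subs] count_union[of Estar p s t k] by (meson order_trans)
  next
    fix e assume e: "e \<in> Estar - path_edges p"
    have subs: "{g \<in> groups Estar p s t k. g \<noteq> {} \<and> e \<in> HE Estar p s t Ps Pt g} \<subseteq>
      {g \<in> groups Estar p s t k. (\<exists>i\<in>g. aidx Estar p s i = first_idx Estar p (fst e)) \<or> (\<exists>i\<in>g. bidx Estar p t i = last_idx Estar p (fst e))}"
    proof
      fix g assume "g \<in> {g \<in> groups Estar p s t k. g \<noteq> {} \<and> e \<in> HE Estar p s t Ps Pt g}"
      then have g: "g \<in> groups Estar p s t k" "g \<noteq> {}" "e \<in> HE Estar p s t Ps Pt g" by auto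
      have sub: "g \<subseteq> {..<k}" using groups_sub[OF g(1)] .
      have mx: "Max (bidx Estar p t ` g) < length p" using max_b_lt[OF g(1,2) exT] .
      from g(3) consider (P) l where "e = (p ! l, p ! Suc l)" "l < Max (bidx Estar p t ` g)"
        | (S) i where "i \<in> g" "e \<in> path_edges (Ps i)" | (T) i where "i \<in> g" "e \<in> path_edges (Pt i)"
        unfolding HE_def by blast
      then have "(\<exists>i\<in>g. aidx Estar p s i = first_idx Estar p (fst e)) \<or> (\<exists>i\<in>g. bidx Estar p t i = last_idx Estar p (fst e))"
      proof cases
        case (P l) then have "e \<in> path_edges p" using mx unfolding path_edges_def by auto
        then show ?thesis using e by blast
      next
        case (S i) then show ?thesis using keyS[of i "fst e"] sub fstmem[OF S(2)] by auto
      next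
        case (T i) then show ?thesis using keyT[of i "fst e"] sub fstmem[OF T(2)] by auto
      qed
      then show "g \<in> {g \<in> groups Estar p s t k. (\<exists>i\<in>g. aidx Estar p s i = first_idx Estar p (fst e)) \<or> (\<exists>i\<in>g. bidx Estar p t i = last_idx Estar p (fst e))}"
        using g(1) by simp
    qed
    then show "card {g \<in> groups Estar p s t k. g \<noteq> {} \<and> e \<in> HE Estar p s t Ps Pt g} \<le> 10 * lg (plen p) + 12"
      using card_mono[OF fin subs] count_union[of Estar p s t k] by (meson order_trans)
  qed
qed

end
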